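(* Let $G$ be a $2K_2$-free graph, let $a,b$ be adjacent vertices of $G$, and let $X$ be a minimal dominating set of $G$ with $a,b\in X$ and $|X|>\alpha(G)$. Let $N$ be the set of vertices not in $\{a,b\}$ adjacent to at least one of $a,b$ and let $Y=X\cap N$. If $|Y|>1$, then every vertex of $Y$ is adjacent to both $a$ and $b$.
   Context: All graphs are finite, simple and undirected. $2K_2$-free means no induced subgraph isomorphic to the disjoint union of two edges. $\alpha(G)$ is the maximum size of an independent set of $G$. A dominating set is a vertex set $D$ such that every vertex outside $D$ has a neighbour in $D$; it is minimal if no proper subset is dominating. *)

theory Defs
  imports Main
begin

definition graph :: "'a set \<Rightarrow> ('a \<Rightarrow> 'a \<Rightarrow> bool) \<Rightarrow> bool" where
  "graph V E \<longleftrightarrow> finite V \<and> (\<forall>x y. E x y \<longrightarrow> x \<in> V \<and> y \<in> V)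
     \<and> (\<forall>x y. E x y \<longrightarrow> E y x) \<and> (\<forall>x. \<not> E x x)"

definition two_K2_free :: "'a set \<Rightarrow> ('a \<Rightarrow> 'a \<Rightarrow> bool) \<Rightarrow> bool" where
  "two_K2_free V E \<longleftrightarrow> \<not> (\<exists>a\<in>V. \<exists>b\<in>V. \<exists>c\<in>V. \<exists>d\<in>V.
      distinct [a, b, c, d] \<and> E a b \<and> E c d \<and>
      \<not> E a c \<and> \<not> E a d \<and> \<not> E b c \<and> \<not> E b d)"

definition independent_set :: "'a set \<Rightarrow> ('a \<Rightarrow> 'a \<Rightarrow> bool) \<Rightarrow> 'a set \<Rightarrow> bool" where
  "independent_set V E S \<longleftrightarrow> S \<subseteq> V \<and> (\<forall>x\<in>S. \<forall>y\<in>S. \<not> E x y)"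

definition alpha :: "'a set \<Rightarrow> ('a \<Rightarrow> 'a \<Rightarrow> bool) \<Rightarrow> nat" where
  "alpha V E = Max (card ` {S. independent_set V E S})"

definition dominating_set :: "'a set \<Rightarrow> ('a \<Rightarrow> 'a \<Rightarrow> bool) \<Rightarrow> 'a set \<Rightarrow> bool" where
  "dominating_set V E D \<longleftrightarrow> D \<subseteq> V \<and> (\<forall>v\<in>V - D. \<exists>u\<in>D. E v u)"

definition minimal_dominating_set :: "'a set \<Rightarrow> ('a \<Rightarrow> 'a \<Rightarrow> bool) \<Rightarrow> 'a set \<Rightarrow> bool" where
  "minimal_dominating_set V E D \<longleftrightarrow> dominating_set V E D \<and>
     (\<forall>D'. D' \<subset> D \<longrightarrow> \<not> dominating_set V E D')"

end

theory Submission
  imports Defs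
begin

lemma nok:
  assumes "two_K2_free V E" "a \<in> V" "b \<in> V" "c \<in> V" "d \<in> V"
    "distinct [a, b, c, d]" "E a b" "E c d"
  shows "E a c \<or> E a d \<or> E b c \<or> E b d"
proof (rule ccontr)
  assume h: "\<not> ?thesis"
  have "\<exists>a\<in>V. \<exists>b\<in>V. \<exists>c\<in>V. \<exists>d\<in>V.
      distinct [a, b, c, d] \<and> E a b \<and> E c d \<and>
      \<not> E a c \<and> \<not> E a d \<and> \<not> E b c \<and> \<not> E b d"
    using assms(2-8) h by blast
  with assms(1) show False unfolding two_K2_free_def by blast
qed

lemma priv:
  assumes "graph V E" "minimal_dominating_set V E X" "x \<in> X" "z \<in> X" "E x z"
  shows "\<exists>p\<in>V. p \<notin> X \<and> E p x \<and> (\<forall>u\<in>X. u \<noteq> x \<longrightarrow> \<not> E p u)"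
proof -
  have dom: "dominating_set V E X" and nd: "\<not> dominating_set V E (X - {x})"
    using assms(2,3) unfolding minimal_dominating_set_def by auto
  have XV: "X \<subseteq> V" using dom unfolding dominating_set_def by auto
  have zx: "z \<noteq> x" using assms(1,5) unfolding graph_def by auto
  from nd XV obtain v where v: "v \<in> V" "v \<notin> X - {x}" "\<forall>u\<in>X - {x}. \<not> E v u"
    unfolding dominating_set_def by blast
  have "v \<noteq> x"
  proof
    assume "v = x"
    with v(3) assms(4,5) zx show False by auto
  qed
  with v have vX: "v \<notin> X" by auto
  with dom v obtain u where "u \<in> X" "E v u" unfolding dominating_set_def by blast
  with v have "u = x" by auto
  with v vX \<open>E v u\<close> show ?thesis by auto
qed

lemma core:
  assumes g: "graph V E" and f: "two_K2_free V E"
    and m: "minimal_dominating_set V E X"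
    and X: "a \<in> X" "b \<in> X" "y \<in> X" "y' \<in> X"
    and d: "y \<noteq> a" "y \<noteq> b" "y' \<noteq> a" "y' \<noteq> b" "y' \<noteq> y"
    and e: "E a b" "E y a" "\<not> E y b" "E y' a \<or> E y' b"
  shows False
proof -
  have sym: "\<And>u v. E u v \<Longrightarrow> E v u" using g unfolding graph_def by blast
  have XV: "X \<subseteq> V" using m unfolding minimal_dominating_set_def dominating_set_def by auto
  have ab: "a \<noteq> b" using g e(1) unfolding graph_def by auto
  obtain pa where pa: "pa \<in> V" "pa \<notin> X" "E pa a" "\<forall>u\<in>X. u \<noteq> a \<longrightarrow> \<not> E pa u"
    using priv[OF g m X(1) X(2) e(1)] by blast
  obtain pb where pb: "pb \<in> V" "pb \<notin> X" "E pb b" "\<forall>u\<in>X. u \<noteq> b \<longrightarrow> \<not> E pb u"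
    using priv[OF g m X(2) X(1) sym[OF e(1)]] by blast
  obtain py where py: "py \<in> V" "py \<notin> X" "E py y" "\<forall>u\<in>X. u \<noteq> y \<longrightarrow> \<not> E py u"
    using priv[OF g m X(3) X(1) e(2)] by blast
  have "\<exists>q. q \<in> V \<and> q \<notin> X \<and> E q y' \<and> (\<forall>u\<in>X. u \<noteq> y' \<longrightarrow> \<not> E q u)"
    using e(4) priv[OF g m X(4) X(1)] priv[OF g m X(4) X(2)] by blast
  then obtain py' where py': "py' \<in> V" "py' \<notin> X" "E py' y'" "\<forall>u\<in>X. u \<noteq> y' \<longrightarrow> \<not> E py' u"
    by blast
  have nE: "\<And>u v. \<not> E u v \<Longrightarrow> \<not> E v u" using sym by blast
  have aV: "a \<in> V" "b \<in> V" "y \<in> V" "y' \<in> V" using X XV by auto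
  have N1: "\<not> E pa b" "\<not> E pa y" "\<not> E pa y'" "\<not> E pb a" "\<not> E pb y" "\<not> E pb y'"
     "\<not> E py a" "\<not> E py b" "\<not> E py y'" "\<not> E py' a" "\<not> E py' b" "\<not> E py' y"
    using pa(4) pb(4) py(4) py'(4) X d ab by auto
  have N2: "\<not> E b pa" "\<not> E y pa" "\<not> E y' pa" "\<not> E a pb" "\<not> E y pb" "\<not> E y' pb"
     "\<not> E a py" "\<not> E b py" "\<not> E y' py" "\<not> E a py'" "\<not> E b py'" "\<not> E y py'"
    using N1 sym by auto
  have pypb: "py \<noteq> pb" using py(3) N1(5) by auto
  have papy: "pa \<noteq> py" using py(3) N1(2) by auto
  have papy': "pa \<noteq> py'" using py'(3) N1(3) by auto
  have pbpy': "pb \<noteq> py'" using py'(3) N1(6) by auto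
  have pypy': "py \<noteq> py'" using py'(3) N1(9) by auto
  have papb: "pa \<noteq> pb" using pa(3) N1(4) by auto
  have E1: "E py pb"
  proof -
    have "E y b \<or> E y pb \<or> E py b \<or> E py pb"
      by (rule nok[OF f aV(3) py(1) aV(2) pb(1) _ py(3)[THEN sym] pb(3)[THEN sym]]) (use d py(2) pb(2) X pypb in auto)
    moreover have "\<not> E y pb" using N2 by simp
    moreover have "\<not> E py b" using N1 by simp
    ultimately show ?thesis using e(3) by blast
  qed
  show False
  proof (cases "E y' a")
    case True
    have "E a py \<or> E a pb \<or> E y' py \<or> E y' pb"
      by (rule nok[OF f aV(1) aV(4) py(1) pb(1) _ sym[OF True] E1]) (use d py(2) pb(2) X pypb in auto)
    then show False using N1 N2 by simp
  next
    case False
    with e(4) have yb: "E y' b" by blast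
    show False
    proof (cases "E y y'")
      case False
      have "E y b \<or> E y y' \<or> E py b \<or> E py y'"
        by (rule nok[OF f aV(3) py(1) aV(2) aV(4) _ py(3)[THEN sym] sym[OF yb]]) (use d py(2) X in auto)
      then show False using False e(3) N1 N2 sym by auto
    next
      case True
      have E2: "E pa py'"
      proof -
        have "E a y' \<or> E a py' \<or> E pa y' \<or> E pa py'"
          by (rule nok[OF f aV(1) pa(1) aV(4) py'(1) _ pa(3)[THEN sym] py'(3)[THEN sym]]) (use d pa(2) py'(2) X papy' in auto)
        then show ?thesis using \<open>\<not> E y' a\<close> N1 N2 sym by auto
      qed
      have "E py pa \<or> E py py' \<or> E pb pa \<or> E pb py'"
        by (rule nok[OF f py(1) pb(1) pa(1) py'(1) _ E1 E2]) (use papy papy' pypy' papb pbpy' pypb in auto)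
      then show False
      proof (elim disjE)
        assume h: "E py pa"
        have "E b py \<or> E b pa \<or> E y' py \<or> E y' pa"
          by (rule nok[OF f aV(2) aV(4) py(1) pa(1) _ sym[OF yb] h]) (use d py(2) pa(2) X papy in auto)
        then show False using N1 N2 by simp
      next
        assume h: "E py py'"
        have "E a py \<or> E a py' \<or> E b py \<or> E b py'"
          by (rule nok[OF f aV(1) aV(2) py(1) py'(1) _ e(1) h]) (use d ab py(2) py'(2) X pypy' in auto)
        then show False using N1 N2 by simp
      next
        assume h: "E pb pa"
        have "E y pb \<or> E y pa \<or> E y' pb \<or> E y' pa"
          by (rule nok[OF f aV(3) aV(4) pb(1) pa(1) _ True h]) (use d pb(2) pa(2) X papb in auto)
        then show False using N1 N2 by simp
      next
        assume h: "E pb py'"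
        have "E a pb \<or> E a py' \<or> E y pb \<or> E y py'"
          by (rule nok[OF f aV(1) aV(3) pb(1) py'(1) _ sym[OF e(2)] h]) (use d pb(2) py'(2) X pbpy' in auto)
        then show False using N1 N2 by simp
      qed
    qed
  qed
qed

theorem claim4:
  fixes V :: "'a set" and E :: "'a \<Rightarrow> 'a \<Rightarrow> bool" and a b :: 'a and X :: "'a set"
  assumes "graph V E"
    and "two_K2_free V E"
    and "a \<in> V" and "b \<in> V" and "E a b"
    and "minimal_dominating_set V E X"
    and "a \<in> X" and "b \<in> X"
    and "card X > alpha V E"
    and "card (X \<inter> {v \<in> V - {a, b}. E v a \<or> E v b}) > 1"
  shows "\<forall>y \<in> X \<inter> {v \<in> V - {a, b}. E v a \<or> E v b}. E y a \<and> E y b"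
proof
  fix y assume y: "y \<in> X \<inter> {v \<in> V - {a, b}. E v a \<or> E v b}"
  let ?Y = "X \<inter> {v \<in> V - {a, b}. E v a \<or> E v b}"
  have sym: "\<And>u v. E u v \<Longrightarrow> E v u" using assms(1) unfolding graph_def by blast
  obtain y' where y': "y' \<in> ?Y" "y' \<noteq> y"
  proof -
    have "\<not> ?Y \<subseteq> {y}"
    proof
      assume "?Y \<subseteq> {y}"
      then have "card ?Y \<le> card {y}" by (intro card_mono) auto
      with assms(10) show False by simp
    qed
    then show ?thesis using that by blast
  qed
  show "E y a \<and> E y b"
  proof (rule ccontr)
    assume n: "\<not> (E y a \<and> E y b)"
    show False
    proof (cases "E y a")
      case True
      with n have "\<not> E y b" by blast
      show False
        by (rule core[OF assms(1,2,6,7,8), of y y']) (use y y' True \<open>\<not> E y b\<close> assms(5) in auto)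
    next
      case False
      with y have yb: "E y b" by blast
      show False
        by (rule core[OF assms(1,2,6,8,7), of y y']) (use y y' False yb sym assms(5) in auto)
    qed
  qed
qed

end
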